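(* Let $b\geq 1$ be odd, let $n,k$ be positive integers with $k\leq n-2$, and let $\mathbf{s}=s_1\ldots s_k$ be an integer sequence such that the set $\mathbf{s}\,|\,R_n(b)$ is nonempty. Let $\mathbf{t}$ be the $\prec$-first sequence in $\mathbf{s}\,|\,R_n(b)$, and let $M=\min\{b,\max\{s_i\}_{i=1}^k+1\}$. Then: (1) if $\sum_{i=1}^k s_i$ is odd and $M$ is odd, then $\mathbf{t}=\mathbf{s}M0\ldots0$; (2) if $\sum_{i=1}^k s_i$ is odd and $M$ is even, then $\mathbf{t}=\mathbf{s}M(M+1)0\ldots0$; (3) if $\sum_{i=1}^k s_i$ is even, then $\mathbf{t}=\mathbf{s}0\ldots0$. (In each case the trailing zeros fill the sequence up to length $n$.)
   Context: A restricted growth function of length $n$ is an integer sequence $s_1\ldots s_n$ with $s_1=0$ and $0\leq s_{i+1}\leq \max\{s_j\}_{j=1}^i+1$ for $1\leq i\leq n-1$; $R_n$ is the set of these. For an integer $b\geq1$, $R_n(b)=\{s_1\ldots s_n\in R_n: \max_i s_i\leq b\}$. For a sequence $\mathbf{u}$ and a set $S$ of sequences, $\mathbf{u}\,|\,S$ denotes the subset of $S$ of sequences having prefix $\mathbf{u}$. The Reflected Gray Code Order $\prec$ on length-$n$ sequences of nonnegative integers: $s_1\ldots s_n\prec t_1\ldots t_n$ if, for the smallest $k$ with $s_k\neq t_k$, either $\sum_{i=1}^{k-1}s_i$ is even and $s_k<t_k$, or $\sum_{i=1}^{k-1}s_i$ is odd and $s_k>t_k$. The $\prec$-first sequence of a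 set is its smallest element with respect to $\prec$. *)

theory Defs
  imports Main
begin

(* Sequences s_1 ... s_n are represented as lists of integers; s_i = s ! (i-1). *)

definition rgf :: "nat \<Rightarrow> int list set" where
  "rgf n = {s. length s = n \<and> (n > 0 \<longrightarrow> s ! 0 = 0) \<and>
      (\<forall>i. 1 \<le> i \<and> i < n \<longrightarrow> 0 \<le> s ! i \<and> s ! i \<le> Max (set (take i s)) + 1)}"

definition rgf_b :: "nat \<Rightarrow> int \<Rightarrow> int list set" where
  "rgf_b n b = {s \<in> rgf n. \<forall>x \<in> set s. x \<le> b}"

definition with_prefix :: "int list \<Rightarrow> int list set \<Rightarrow> int list set" where
  "with_prefix u S = {t \<in> S. take (length u) t = u}"

definition gray_less :: "int list \<Rightarrow> int list \<Rightarrow> bool" where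
  "gray_less s t \<longleftrightarrow> length s = length t \<and>
     (\<exists>k < length s. take k s = take k t \<and> s ! k \<noteq> t ! k \<and>
        ((even (sum_list (take k s)) \<and> s ! k < t ! k) \<or>
         (odd (sum_list (take k s)) \<and> s ! k > t ! k)))"

definition gray_first :: "int list set \<Rightarrow> int list \<Rightarrow> bool" where
  "gray_first S t \<longleftrightarrow> t \<in> S \<and> (\<forall>u \<in> S. u \<noteq> t \<longrightarrow> gray_less t u)"

end

theory Submission imports Defs begin
lemma rgf_nonneg: "u \<in> rgf n \<Longrightarrow> i < n \<Longrightarrow> 0 \<le> u ! i"
  unfolding rgf_def by (cases "i = 0") auto

lemma rgf_grow: "u \<in> rgf n \<Longrightarrow> 1 \<le> i \<Longrightarrow> i < n \<Longrightarrow> u ! i \<le> Max (set (take i u)) + 1"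
  unfolding rgf_def by auto

lemma rgfb_le: "u \<in> rgf_b n b \<Longrightarrow> x \<in> set u \<Longrightarrow> x \<le> b"
  unfolding rgf_b_def by auto

lemma first_unique:
  assumes "gray_first S t" "c \<in> S" "\<forall>u\<in>S. \<not> gray_less u c"
  shows "t = c"
proof (rule ccontr)
  assume ne: "t \<noteq> c"
  have tS: "t \<in> S" and all: "\<forall>u\<in>S. u \<noteq> t \<longrightarrow> gray_less t u"
    using assms(1) unfolding gray_first_def by auto
  have "gray_less t c" using all assms(2) ne by auto
  moreover have "\<not> gray_less t c" using assms(3) tS by auto
  ultimately show False by contradiction
qed

lemma gen_contra:
  assumes u: "u \<in> rgf_b n b" and j: "j < n" "1 \<le> j"
    and tk: "take j u = take j c" and ne: "u ! j \<noteq> c ! j"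
    and ord: "(even (sum_list (take j u)) \<and> u ! j < c ! j) \<or> (odd (sum_list (take j u)) \<and> u ! j > c ! j)"
    and ev: "even (sum_list (take j c)) \<Longrightarrow> c ! j = 0"
    and od: "odd (sum_list (take j c)) \<Longrightarrow> c ! j \<ge> min b (Max (set (take j c)) + 1)"
  shows False
proof -
  have ur: "u \<in> rgf n" using u unfolding rgf_b_def by auto
  have len: "length u = n" using ur unfolding rgf_def by auto
  have "0 \<le> u ! j" using rgf_nonneg[OF ur j(1)] .
  moreover have "u ! j \<le> Max (set (take j c)) + 1" using rgf_grow[OF ur j(2) j(1)] tk by simp
  moreover have "u ! j \<le> b" using rgfb_le[OF u] len j by auto
  moreover have "sum_list (take j u) = sum_list (take j c)" using tk by simp
  ultimately show False
  proof (cases "even (sum_list (take j c))")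
    case True
    then have "c ! j = 0" "u ! j < c ! j" using ev ord tk by auto
    then show False using \<open>0 \<le> u ! j\<close> by linarith
  next
    case False
    then have "c ! j \<ge> min b (Max (set (take j c)) + 1)" "u ! j > c ! j" using od ord tk by auto
    then show False using \<open>u ! j \<le> b\<close> \<open>u ! j \<le> Max (set (take j c)) + 1\<close> by linarith
  qed
qed

lemma mem:
  assumes u0: "u0 \<in> with_prefix s (rgf_b n b)" and ls: "length s = k" and k: "0 < k" "k \<le> n"
    and lw: "length w = n - k" and wb: "\<forall>x\<in>set w. x \<le> b"
    and wg: "\<forall>i<length w. 0 \<le> w!i \<and> w!i \<le> Max (set (s @ take i w)) + 1"
  shows "s @ w \<in> with_prefix s (rgf_b n b)"
proof -
  have u0r: "u0 \<in> rgf_b n b" and tk: "take k u0 = s" using u0 ls unfolding with_prefix_def by auto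
  have u0rg: "u0 \<in> rgf n" using u0r unfolding rgf_b_def by blast
  have lu: "length u0 = n" using u0rg unfolding rgf_def by blast
  have sb: "\<forall>x\<in>set s. x \<le> b" using u0r tk unfolding rgf_b_def using in_set_takeD by fastforce
  have u00: "u0 ! 0 = 0" using u0rg k lu unfolding rgf_def by auto
  have s0: "s ! 0 = 0" using u00 tk k by (metis nth_take)
  have grow: "0 \<le> (s@w) ! i \<and> (s@w) ! i \<le> Max (set (take i (s@w))) + 1" if i: "1 \<le> i" "i < n" for i
  proof (cases "i < k")
    case True
    have e1: "(s@w)!i = u0 ! i" using True tk ls by (metis nth_append nth_take)
    have "take i (s@w) = take i s" using True ls by simp
    also have "\<dots> = take i u0" using True tk by (metis min.strict_order_iff take_take)
    finally have e2: "take i (s@w) = take i u0" .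
    have "0 \<le> u0 ! i \<and> u0 ! i \<le> Max (set (take i u0)) + 1"
      using u0rg i unfolding rgf_def by blast
    then show ?thesis unfolding e1 e2 .
  next
    case False
    have e1: "(s@w)!i = w ! (i-k)" using False ls by (simp add: nth_append)
    have e2: "take i (s@w) = s @ take (i-k) w" using False ls by simp
    have "i - k < length w" using lw i False by auto
    then show ?thesis unfolding e1 e2 using wg by blast
  qed
  have len: "length (s @ w) = n" using lw ls k by simp
  have hd: "(s @ w) ! 0 = 0" using s0 k ls by (simp add: nth_append)
  have bd: "\<forall>x\<in>set (s @ w). x \<le> b" using sb wb by auto
  have tk2: "take (length s) (s @ w) = s" by simp
  have "s @ w \<in> rgf n" unfolding rgf_def using len hd grow by blast
  then have "s @ w \<in> rgf_b n b" unfolding rgf_b_def using bd by blast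
  then show ?thesis unfolding with_prefix_def using tk2 by blast
qed

lemma no_less:
  assumes u: "u \<in> with_prefix s (rgf_b n b)" and ls: "length s = k" and k: "0 < k"
    and lc: "length (s@w) = n"
    and wc: "\<forall>i<length w. (even (sum_list (s @ take i w)) \<longrightarrow> w!i = 0) \<and>
              (odd (sum_list (s @ take i w)) \<longrightarrow> w!i \<ge> min b (Max (set (s @ take i w)) + 1))"
  shows "\<not> gray_less u (s@w)"
proof
  assume "gray_less u (s@w)"
  then obtain j where j: "j < length u" "take j u = take j (s@w)" "u ! j \<noteq> (s@w) ! j"
    "(even (sum_list (take j u)) \<and> u ! j < (s@w) ! j) \<or> (odd (sum_list (take j u)) \<and> u ! j > (s@w) ! j)"
    unfolding gray_less_def by blast
  have ur: "u \<in> rgf_b n b" and tk: "take k u = s" using u ls unfolding with_prefix_def by auto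
  have lu: "length u = n" using ur unfolding rgf_b_def rgf_def by auto
  show False
  proof (cases "j < k")
    case True
    then have "u ! j = (s@w) ! j" using tk ls by (metis nth_append nth_take)
    then show False using j by auto
  next
    case False
    have e1: "(s@w)!j = w ! (j-k)" using False ls by (simp add: nth_append)
    have e2: "take j (s@w) = s @ take (j-k) w" using False ls by simp
    have "j - k < length w" using lc lu j False ls by auto
    then have w1: "even (sum_list (take j (s@w))) \<Longrightarrow> (s@w) ! j = 0"
      and w2: "odd (sum_list (take j (s@w))) \<Longrightarrow> (s@w) ! j \<ge> min b (Max (set (take j (s@w))) + 1)"
      using wc unfolding e1 e2 by blast+
    have j1: "1 \<le> j" using False k by auto
    have jn: "j < n" using j(1) lu by simp
    show False
      by (rule gen_contra[OF ur jn j1 j(2) j(3) j(4) w1 w2])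
  qed
qed

lemma max_app_ge: "x \<in> set s \<or> x \<in> set v \<Longrightarrow> x \<le> Max (set (s @ v))"
  by (auto intro: Max_ge)

theorem proposition2:
  fixes b :: int and n k :: nat and s t :: "int list"
  assumes "b \<ge> 1" and "odd b"
    and "0 < k" and "k \<le> n - 2"
    and "length s = k"
    and "with_prefix s (rgf_b n b) \<noteq> {}"
    and "gray_first (with_prefix s (rgf_b n b)) t"
  defines "M \<equiv> min b (Max (set s) + 1)"
  shows "(odd (sum_list s) \<and> odd M \<longrightarrow> t = s @ [M] @ replicate (n - k - 1) 0)
       \<and> (odd (sum_list s) \<and> even M \<longrightarrow> t = s @ [M, M + 1] @ replicate (n - k - 2) 0)
       \<and> (even (sum_list s) \<longrightarrow> t = s @ replicate (n - k) 0)"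
proof -
  note a = assms
  obtain u0 where u0: "u0 \<in> with_prefix s (rgf_b n b)" using a(6) by blast
  have u0r: "u0 \<in> rgf_b n b" and tk: "take k u0 = s" using u0 a(5) unfolding with_prefix_def by auto
  have u0rg: "u0 \<in> rgf n" using u0r unfolding rgf_b_def by auto
  have lu: "length u0 = n" using u0rg unfolding rgf_def by auto
  have kn: "k + 2 \<le> n" using a(3,4) by auto
  have sb: "\<forall>x\<in>set s. x \<le> b" using u0r tk unfolding rgf_b_def using in_set_takeD by fastforce
  have s0: "s ! 0 = 0" using u0rg tk a(3) lu kn unfolding rgf_def by auto
  have zs: "0 \<in> set s" using s0 a(3,5) by (metis nth_mem)
  define mx where "mx = Max (set s)"
  have mx0: "0 \<le> mx" using zs unfolding mx_def by (auto intro: Max_ge)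
  have mxb: "mx \<le> b" using sb zs unfolding mx_def by (intro Max.boundedI) auto
  have M1: "1 \<le> M" "M \<le> b" "M \<le> mx + 1" using mx0 a(1) unfolding M_def mx_def by auto
  have Mmin: "M = min b (mx + 1)" unfolding M_def mx_def by simp
  have mxapp: "mx \<le> Max (set (s @ v))" for v
    unfolding mx_def using zs by (intro Max_mono) auto
  have unq: "t = s @ w" if lw: "length w = n - k" and wb: "\<forall>x\<in>set w. x \<le> b"
    and wg: "\<forall>i<length w. 0 \<le> w!i \<and> w!i \<le> Max (set (s @ take i w)) + 1"
    and wc: "\<forall>i<length w. (even (sum_list (s @ take i w)) \<longrightarrow> w!i = 0) \<and>
              (odd (sum_list (s @ take i w)) \<longrightarrow> w!i \<ge> min b (Max (set (s @ take i w)) + 1))" for w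
  proof (rule first_unique[OF a(7)])
    show "s @ w \<in> with_prefix s (rgf_b n b)"
      using mem[OF u0 a(5) a(3) _ lw wb wg] kn by auto
    show "\<forall>u\<in>with_prefix s (rgf_b n b). \<not> gray_less u (s @ w)"
      using no_less[OF _ a(5) a(3) _ wc] lw a(5) kn by auto
  qed
  have c3: "t = s @ replicate (n - k) (0::int)" if ev: "even (sum_list s)"
  proof (rule unq)
    show "\<forall>i<length (replicate (n - k) (0::int)). 0 \<le> replicate (n - k) (0::int) ! i \<and>
      replicate (n - k) (0::int) ! i \<le> Max (set (s @ take i (replicate (n - k) (0::int)))) + 1"
    proof (intro allI impI)
      fix i assume "i < length (replicate (n - k) (0::int))"
      then show "0 \<le> replicate (n - k) (0::int) ! i \<and>
        replicate (n - k) (0::int) ! i \<le> Max (set (s @ take i (replicate (n - k) (0::int)))) + 1"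
        using mxapp[of "take i (replicate (n - k) (0::int))"] mx0 by simp
    qed
    show "\<forall>i<length (replicate (n - k) (0::int)). (even (sum_list (s @ take i (replicate (n - k) (0::int)))) \<longrightarrow> replicate (n - k) (0::int) ! i = 0) \<and>
              (odd (sum_list (s @ take i (replicate (n - k) (0::int)))) \<longrightarrow> replicate (n - k) (0::int) ! i \<ge> min b (Max (set (s @ take i (replicate (n - k) (0::int)))) + 1))"
      using ev by (simp add: take_replicate sum_list_replicate)
  qed (use a(1) in auto)
  have c1: "t = s @ [M] @ replicate (n - k - 1) 0" if od: "odd (sum_list s)" "odd M"
  proof -
    define w where "w = M # replicate (n - k - 1) (0::int)"
    have "t = s @ w"
    proof (rule unq)
      show "length w = n - k" using kn unfolding w_def by auto
      show "\<forall>x\<in>set w. x \<le> b" using M1 a(1) unfolding w_def by auto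
      show "\<forall>i<length w. 0 \<le> w!i \<and> w!i \<le> Max (set (s @ take i w)) + 1"
      proof (intro allI impI)
        fix i assume i: "i < length w"
        show "0 \<le> w!i \<and> w!i \<le> Max (set (s @ take i w)) + 1"
        proof (cases i)
          case 0 then show ?thesis using M1 unfolding w_def mx_def by simp
        next
          case (Suc j) then show ?thesis using mxapp[of "take i w"] mx0 i unfolding w_def by simp
        qed
      qed
      show "\<forall>i<length w. (even (sum_list (s @ take i w)) \<longrightarrow> w!i = 0) \<and>
              (odd (sum_list (s @ take i w)) \<longrightarrow> w!i \<ge> min b (Max (set (s @ take i w)) + 1))"
      proof (intro allI impI)
        fix i assume i: "i < length w"
        show "(even (sum_list (s @ take i w)) \<longrightarrow> w!i = 0) \<and>
              (odd (sum_list (s @ take i w)) \<longrightarrow> w!i \<ge> min b (Max (set (s @ take i w)) + 1))"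
        proof (cases i)
          case 0 then show ?thesis using od unfolding w_def M_def by simp
        next
          case (Suc j) then show ?thesis using od i unfolding w_def by (simp add: take_replicate sum_list_replicate)
        qed
      qed
    qed
    then show ?thesis unfolding w_def by simp
  qed
  have c2: "t = s @ [M, M + 1] @ replicate (n - k - 2) 0" if od: "odd (sum_list s)" "even M"
  proof -
    have Mnb: "M \<noteq> b" using od(2) a(2) by auto
    have Mb1: "M = mx + 1" using Mnb Mmin by (auto simp: min_def split: if_splits)
    have Mb: "M = mx + 1" "M + 1 \<le> b" using Mb1 Mnb M1 by auto
    have st: "set (s @ [M]) = insert M (set s)" by simp
    have Mx2: "Max (set (s @ [M])) = M" unfolding st using Mb zs unfolding mx_def
      by (subst Max_insert) auto
    define w where "w = M # (M + 1) # replicate (n - k - 2) (0::int)"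
    have "t = s @ w"
    proof (rule unq)
      show "length w = n - k" using kn unfolding w_def by auto
      show "\<forall>x\<in>set w. x \<le> b" using M1 Mb a(1) unfolding w_def by auto
      show "\<forall>i<length w. 0 \<le> w!i \<and> w!i \<le> Max (set (s @ take i w)) + 1"
      proof (intro allI impI)
        fix i assume i: "i < length w"
        show "0 \<le> w!i \<and> w!i \<le> Max (set (s @ take i w)) + 1"
        proof (cases i)
          case 0 then show ?thesis using M1 unfolding w_def mx_def by simp
        next
          case (Suc j) note j = this
          show ?thesis
          proof (cases j)
            case 0 then show ?thesis using j M1 Mx2 unfolding w_def by simp
          next
            case (Suc l) then show ?thesis using j mxapp[of "take i w"] mx0 i unfolding w_def by simp
          qed
        qed
      qed
      show "\<forall>i<length w. (even (sum_list (s @ take i w)) \<longrightarrow> w!i = 0) \<and>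
              (odd (sum_list (s @ take i w)) \<longrightarrow> w!i \<ge> min b (Max (set (s @ take i w)) + 1))"
      proof (intro allI impI)
        fix i assume i: "i < length w"
        show "(even (sum_list (s @ take i w)) \<longrightarrow> w!i = 0) \<and>
              (odd (sum_list (s @ take i w)) \<longrightarrow> w!i \<ge> min b (Max (set (s @ take i w)) + 1))"
        proof (cases i)
          case 0 then show ?thesis using od unfolding w_def M_def by simp
        next
          case (Suc j) note j = this
          show ?thesis
          proof (cases j)
            case 0 then show ?thesis using j od Mx2 unfolding w_def by simp
          next
            case (Suc l) then show ?thesis using j od i unfolding w_def by (simp add: take_replicate sum_list_replicate)
          qed
        qed
      qed
    qed
    then show ?thesis unfolding w_def by simp
  qed
  show ?thesis using c1 c2 c3 by blast
qed

end
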